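(* Let $\mathcal H_+=\mathcal H_-=\mathbb C^2$, $\mathcal H=\mathcal H_+\oplus\mathcal H_-$. Fix $b>0$ and $d_1,d_2\in i\mathbb R$, and put $B=\begin{pmatrix}b&0\\0&0\end{pmatrix}$, $D=\begin{pmatrix}d_1&0\\0&d_2\end{pmatrix}$. For $\alpha,\beta\in\mathbb C$ with $|\alpha|^2+|\beta|^2=1$ let $u=\begin{pmatrix}\alpha&0\\ \beta&0\end{pmatrix}$ and $$\mu=\begin{pmatrix}0&-Bu^*\\ uB&D\end{pmatrix}.$$ Then for all integers $n\ge1$ and $1\le k\le n+1$ there exist polynomials $p_1,p_2$ in two variables with real coefficients (depending only on $n,k,b,d_1,d_2$) such that for all such $\alpha,\beta$, $$i^{n+1}\big(\mu H^{n-1}_{k-1}(\mu)\big)_{--}\,u=\begin{pmatrix} i\,p_1(|\alpha|^2,|\beta|^2)\,\alpha & 0\\ i\,p_2(|\alpha|^2,|\beta|^2)\,\beta & 0\end{pmatrix}.$$ Equivalently, the equation $\frac{\partial}{\partial t^n_k}u=i^{n+1}(\mu H^{n-1}_{k-1}(\mu))_{--}u$ becomes $\frac{\partial}{\partial t^n_k}\alpha=i p_1(|\alpha|^2,|\beta|^2)\alpha$, $\frac{\partial}{\partial t^n_k}\beta=i p_2(|\alpha|^2,|\beta|^2)\beta$.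
   Context: $P_+$ and $P_-$ denote the orthogonal projectors of $\mathcal H$ onto $\mathcal H_+$ and $\mathcal H_-$; for an operator $X$ on $\mathcal H$, $X_{--}$ denotes the block $P_-XP_-$ regarded as an operator on $\mathcal H_-$. For integers $m\ge 0$ and $0\le l\le m+1$ and a matrix $\mu$ on $\mathcal H$, define $$H^m_l(\mu)=\sum_{\substack{i_0,\dots,i_m\in\{0,1\}\\ i_0+\dots+i_m=l}} P_+^{i_0}\mu P_+^{i_1}\mu\cdots\mu P_+^{i_m},$$ with $P_+^0=I$ the identity and $P_+^1=P_+$. *)

theory Defs
  imports Complex_Main "Jordan_Normal_Form.Matrix"
begin

text \<open>H = H_+ (+) H_-, with H_+ = H_- = C^2; H = C^4, coordinates 0,1 span H_+,
  coordinates 2,3 span H_-. Matrices are Jordan_Normal_Form matrices.\<close>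

definition Pplus :: "complex mat" where
  "Pplus = four_block_mat (1\<^sub>m 2) (0\<^sub>m 2 2) (0\<^sub>m 2 2) (0\<^sub>m 2 2)"

text \<open>P_+^0 = I, P_+^1 = P_+ (encoded by booleans False / True)\<close>
definition Ppow :: "bool \<Rightarrow> complex mat" where
  "Ppow i = (if i then Pplus else 1\<^sub>m 4)"

text \<open>P_+^{i_0} mu P_+^{i_1} mu ... mu P_+^{i_m} for the list [i_0,...,i_m]\<close>
fun Hword :: "complex mat \<Rightarrow> bool list \<Rightarrow> complex mat" where
  "Hword mu [] = 1\<^sub>m 4"
| "Hword mu [i] = Ppow i"
| "Hword mu (i # j # js) = Ppow i * mu * Hword mu (j # js)"

text \<open>H^m_l(mu) (4x4 matrix sum, taken entrywise): sum over (i_0,...,i_m) in {0,1}^(m+1) with i_0+...+i_m = l\<close>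
definition H :: "nat \<Rightarrow> nat \<Rightarrow> complex mat \<Rightarrow> complex mat" where
  "H m l mu = mat 4 4 (\<lambda>(r, c). \<Sum>is \<in> {is :: bool list. length is = m + 1 \<and> length (filter id is) = l}.
      Hword mu is $$ (r, c))"

text \<open>X_{--} = P_- X P_- regarded as an operator on H_-\<close>
definition blk_mm :: "complex mat \<Rightarrow> complex mat" where
  "blk_mm X = mat 2 2 (\<lambda>(i, j). X $$ (i + 2, j + 2))"

definition adj :: "complex mat \<Rightarrow> complex mat" where
  "adj A = transpose_mat (map_mat cnj A)"

definition Bm :: "real \<Rightarrow> complex mat" where
  "Bm b = mat_of_rows_list 2 [[complex_of_real b, 0], [0, 0]]"

definition Dm :: "complex \<Rightarrow> complex \<Rightarrow> complex mat" where
  "Dm d1 d2 = mat_of_rows_list 2 [[d1, 0], [0, d2]]"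

definition um :: "complex \<Rightarrow> complex \<Rightarrow> complex mat" where
  "um \<alpha> \<beta> = mat_of_rows_list 2 [[\<alpha>, 0], [\<beta>, 0]]"

definition mu :: "real \<Rightarrow> complex \<Rightarrow> complex \<Rightarrow> complex \<Rightarrow> complex \<Rightarrow> complex mat" where
  "mu b d1 d2 \<alpha> \<beta> = four_block_mat (0\<^sub>m 2 2) (- (Bm b * adj (um \<alpha> \<beta>)))
                                     (um \<alpha> \<beta> * Bm b) (Dm d1 d2)"

definition poly2 :: "nat \<Rightarrow> (nat \<Rightarrow> nat \<Rightarrow> real) \<Rightarrow> real \<Rightarrow> real \<Rightarrow> real" where
  "poly2 N c x y = (\<Sum>i\<le>N. \<Sum>j\<le>N. c i j * x ^ i * y ^ j)"

end

theory Submission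
  imports Defs "HOL-Computational_Algebra.Polynomial"
begin

definition eval2 :: "real poly poly \<Rightarrow> real \<Rightarrow> real \<Rightarrow> real" where
  "eval2 p x y = poly (poly p [:x:]) y"

lemma eval2_add[simp]: "eval2 (p + q) x y = eval2 p x y + eval2 q x y"
  by (simp add: eval2_def)
lemma eval2_mult[simp]: "eval2 (p * q) x y = eval2 p x y * eval2 q x y"
  by (simp add: eval2_def)
lemma eval2_minus[simp]: "eval2 (- p) x y = - eval2 p x y"
  by (simp add: eval2_def)
lemma eval2_one[simp]: "eval2 1 x y = 1"
  by (simp add: eval2_def)
lemma eval2_zero[simp]: "eval2 0 x y = 0"
  by (simp add: eval2_def)
lemma eval2_const[simp]: "eval2 [:[:c:]:] x y = c"
  by (simp add: eval2_def)
lemma eval2_smult[simp]: "eval2 (smult [:c:] p) x y = c * eval2 p x y"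
  by (simp add: eval2_def)
lemma eval2_sum[simp]: "finite S \<Longrightarrow> eval2 (\<Sum>i\<in>S. f i) x y = (\<Sum>i\<in>S. eval2 (f i) x y)"
  by (induction S rule: finite_induct) auto

definition PX :: "real poly poly" where "PX = [:0, 1:]"
definition PY :: "real poly poly" where "PY = [:[:0, 1:]:]"
lemma eval2_PX[simp]: "eval2 PX x y = x" by (simp add: eval2_def PX_def)
lemma eval2_PY[simp]: "eval2 PY x y = y" by (simp add: eval2_def PY_def)

lemma poly_ext_sum: fixes q :: "'a::comm_semiring_1 poly"
  assumes "degree q \<le> N" shows "poly q z = (\<Sum>i\<le>N. coeff q i * z ^ i)"
proof -
  have "poly q z = (\<Sum>i\<le>degree q. coeff q i * z ^ i)" by (rule poly_altdef)
  also have "\<dots> = (\<Sum>i\<le>N. coeff q i * z ^ i)"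
    by (rule sum.mono_neutral_left) (use assms in \<open>auto simp: coeff_eq_0\<close>)
  finally show ?thesis .
qed

lemma eval2_poly2:
  "\<exists>N0. \<forall>N\<ge>N0. \<exists>c. \<forall>x y. eval2 p x y = poly2 N c x y"
proof -
  define N0 where "N0 = degree p + (\<Sum>i\<le>degree p. degree (coeff p i))"
  have dc: "degree (coeff p i) \<le> N0" for i
  proof (cases "i \<le> degree p")
    case True
    then have "degree (coeff p i) \<le> (\<Sum>i\<le>degree p. degree (coeff p i))"
      by (intro member_le_sum) auto
    then show ?thesis unfolding N0_def by simp
  next
    case False then show ?thesis by (simp add: coeff_eq_0)
  qed
  have "\<forall>N\<ge>N0. \<forall>x y. eval2 p x y = poly2 N (\<lambda>i j. coeff (coeff p i) j) x y"
  proof (intro allI impI)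
    fix N x y assume N: "N0 \<le> N"
    have dp: "degree p \<le> N" using N unfolding N0_def by simp
    have "eval2 p x y = poly (\<Sum>i\<le>N. coeff p i * [:x:] ^ i) y"
      unfolding eval2_def by (subst poly_ext_sum[OF dp]) simp
    also have "\<dots> = (\<Sum>i\<le>N. poly (coeff p i) y * x ^ i)"
      by (simp add: poly_sum poly_power)
    also have "\<dots> = (\<Sum>i\<le>N. (\<Sum>j\<le>N. coeff (coeff p i) j * y ^ j) * x ^ i)"
      by (intro sum.cong refl, subst poly_ext_sum[of _ N]) (use dc N in \<open>auto intro: order_trans\<close>)
    also have "\<dots> = poly2 N (\<lambda>i j. coeff (coeff p i) j) x y"
      unfolding poly2_def by (simp add: sum_distrib_right sum_distrib_left mult_ac)
    finally show "eval2 p x y = poly2 N (\<lambda>i j. coeff (coeff p i) j) x y" .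
  qed
  then show ?thesis by blast
qed


definition eps :: "nat \<Rightarrow> nat" where "eps r = (if 2 \<le> r then 1 else 0)"
definition sgnr :: "nat \<Rightarrow> real" where "sgnr r = (if 2 \<le> r then -1 else 1)"
definition vv :: "complex \<Rightarrow> complex \<Rightarrow> nat \<Rightarrow> complex" where
  "vv \<alpha> \<beta> r = (if r = 2 then \<alpha> else if r = 3 then \<beta> else 1)"
definition av :: "complex \<Rightarrow> complex \<Rightarrow> nat \<Rightarrow> nat \<Rightarrow> complex" where
  "av \<alpha> \<beta> r c = (if r = c then 1 else vv \<alpha> \<beta> r * cnj (vv \<alpha> \<beta> c))"
definition sqp :: "nat \<Rightarrow> real poly poly" where
  "sqp r = (if r = 2 then PX else if r = 3 then PY else 1)"
definition wp :: "nat \<Rightarrow> nat \<Rightarrow> nat \<Rightarrow> real poly poly" where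
  "wp r m c = (if r = m \<or> m = c then 1 else if r = c then sqp r * sqp m else sqp m)"

abbreviation ev2 :: "real poly poly \<Rightarrow> complex \<Rightarrow> complex \<Rightarrow> complex" where
  "ev2 p \<alpha> \<beta> \<equiv> complex_of_real (eval2 p ((cmod \<alpha>)\<^sup>2) ((cmod \<beta>)\<^sup>2))"

lemma zcnj: "z * cnj z = (complex_of_real (cmod z))\<^sup>2"
  using complex_norm_square[of z] by simp

lemma vv_sq: "vv \<alpha> \<beta> m * cnj (vv \<alpha> \<beta> m) = ev2 (sqp m) \<alpha> \<beta>"
  by (simp add: vv_def sqp_def zcnj)

lemma av_mult: "av \<alpha> \<beta> r m * av \<alpha> \<beta> m c = av \<alpha> \<beta> r c * ev2 (wp r m c) \<alpha> \<beta>"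
proof -
  have s: "ev2 (sqp m) \<alpha> \<beta> = vv \<alpha> \<beta> m * cnj (vv \<alpha> \<beta> m)" for m by (simp add: vv_sq)
  show ?thesis
    unfolding av_def wp_def by (auto simp: s mult_ac)
qed

lemma ipow_eps: "\<i> ^ (n + eps r + eps m) * \<i> ^ (k + eps m + eps c)
   = \<i> ^ (n + k + eps r + eps c) * complex_of_real (sgnr m)"
proof -
  have "\<i> ^ (n + eps r + eps m) * \<i> ^ (k + eps m + eps c) = \<i> ^ (n + eps r + eps m + (k + eps m + eps c))"
    by (rule power_add[symmetric])
  also have "n + eps r + eps m + (k + eps m + eps c) = (n + k + eps r + eps c) + 2 * eps m" by simp
  also have "\<i> ^ (n + k + eps r + eps c + 2 * eps m) = \<i> ^ (n + k + eps r + eps c) * \<i> ^ (2 * eps m)"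
    by (rule power_add)
  also have "\<i> ^ (2 * eps m) = complex_of_real (sgnr m)"
    by (cases "2 \<le> m") (simp_all add: eps_def sgnr_def)
  finally show ?thesis .
qed

definition good :: "nat \<Rightarrow> (complex \<Rightarrow> complex \<Rightarrow> complex mat) \<Rightarrow> bool" where
  "good n F \<longleftrightarrow> (\<exists>q. \<forall>\<alpha> \<beta>. dim_row (F \<alpha> \<beta>) = 4 \<and> dim_col (F \<alpha> \<beta>) = 4 \<and>
     (\<forall>r<4. \<forall>c<4. F \<alpha> \<beta> $$ (r, c) = av \<alpha> \<beta> r c * \<i> ^ (n + eps r + eps c) * ev2 (q r c) \<alpha> \<beta>))"

lemma good_mult:
  assumes "good n F" "good k G"
  shows "good (n + k) (\<lambda>\<alpha> \<beta>. F \<alpha> \<beta> * G \<alpha> \<beta>)"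
proof -
  obtain q1 where q1: "\<And>\<alpha> \<beta>. dim_row (F \<alpha> \<beta>) = 4 \<and> dim_col (F \<alpha> \<beta>) = 4 \<and>
     (\<forall>r<4. \<forall>c<4. F \<alpha> \<beta> $$ (r, c) = av \<alpha> \<beta> r c * \<i> ^ (n + eps r + eps c) * ev2 (q1 r c) \<alpha> \<beta>)"
    using assms(1) unfolding good_def by blast
  obtain q2 where q2: "\<And>\<alpha> \<beta>. dim_row (G \<alpha> \<beta>) = 4 \<and> dim_col (G \<alpha> \<beta>) = 4 \<and>
     (\<forall>r<4. \<forall>c<4. G \<alpha> \<beta> $$ (r, c) = av \<alpha> \<beta> r c * \<i> ^ (k + eps r + eps c) * ev2 (q2 r c) \<alpha> \<beta>)"
    using assms(2) unfolding good_def by blast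
  define q where "q r c = (\<Sum>m<4. [:[:sgnr m:]:] * wp r m c * q1 r m * q2 m c)" for r c
  have "dim_row (F \<alpha> \<beta> * G \<alpha> \<beta>) = 4 \<and> dim_col (F \<alpha> \<beta> * G \<alpha> \<beta>) = 4 \<and>
     (\<forall>r<4. \<forall>c<4. (F \<alpha> \<beta> * G \<alpha> \<beta>) $$ (r, c) = av \<alpha> \<beta> r c * \<i> ^ (n + k + eps r + eps c) * ev2 (q r c) \<alpha> \<beta>)"
    for \<alpha> \<beta>
  proof (intro conjI allI impI)
    show "dim_row (F \<alpha> \<beta> * G \<alpha> \<beta>) = 4" "dim_col (F \<alpha> \<beta> * G \<alpha> \<beta>) = 4" using q1 q2 by auto
    fix r c :: nat assume rc: "r < 4" "c < 4"
    have "(F \<alpha> \<beta> * G \<alpha> \<beta>) $$ (r, c) = (\<Sum>m\<in>{0..<4}. F \<alpha> \<beta> $$ (r, m) * G \<alpha> \<beta> $$ (m, c))"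
      using q1 q2 rc by (simp add: scalar_prod_def)
    also have "\<dots> = (\<Sum>m\<in>{0..<4}. av \<alpha> \<beta> r c * \<i> ^ (n + k + eps r + eps c) *
        ev2 ([:[:sgnr m:]:] * wp r m c * q1 r m * q2 m c) \<alpha> \<beta>)"
    proof (intro sum.cong refl)
      fix m assume "m \<in> {0..<4::nat}"
      then have m: "m < 4" by simp
      have "F \<alpha> \<beta> $$ (r, m) * G \<alpha> \<beta> $$ (m, c) =
        (av \<alpha> \<beta> r m * av \<alpha> \<beta> m c) * (\<i> ^ (n + eps r + eps m) * \<i> ^ (k + eps m + eps c)) *
         (ev2 (q1 r m) \<alpha> \<beta> * ev2 (q2 m c) \<alpha> \<beta>)"
        using q1 q2 rc m by (simp add: mult_ac)
      also have "\<dots> = av \<alpha> \<beta> r c * \<i> ^ (n + k + eps r + eps c) *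
        ev2 ([:[:sgnr m:]:] * wp r m c * q1 r m * q2 m c) \<alpha> \<beta>"
        unfolding av_mult ipow_eps by (simp add: mult_ac)
      finally show "F \<alpha> \<beta> $$ (r, m) * G \<alpha> \<beta> $$ (m, c) = av \<alpha> \<beta> r c * \<i> ^ (n + k + eps r + eps c) *
        ev2 ([:[:sgnr m:]:] * wp r m c * q1 r m * q2 m c) \<alpha> \<beta>" .
    qed
    also have "\<dots> = av \<alpha> \<beta> r c * \<i> ^ (n + k + eps r + eps c) * ev2 (q r c) \<alpha> \<beta>"
      unfolding q_def by (simp add: sum_distrib_left atLeast0LessThan)
    finally show "(F \<alpha> \<beta> * G \<alpha> \<beta>) $$ (r, c) = av \<alpha> \<beta> r c * \<i> ^ (n + k + eps r + eps c) * ev2 (q r c) \<alpha> \<beta>" .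
  qed
  then show ?thesis unfolding good_def by blast
qed


lemma good_diag:
  assumes "\<And>\<alpha> \<beta>. F \<alpha> \<beta> = mat 4 4 (\<lambda>(r, c). if r = c then complex_of_real (f r) else 0)"
  shows "good 0 F"
proof -
  define q where "q r c = (if r = c then [:[:sgnr r * f r:]:] else 0)" for r c
  have "(- 1) ^ eps r * complex_of_real (sgnr r) = 1" for r
    by (cases "2 \<le> r") (auto simp: eps_def sgnr_def)
  then show ?thesis unfolding good_def
    by (intro exI[of _ q] allI) (auto simp: assms q_def av_def)
qed

lemma good_Ppow: "good 0 (\<lambda>\<alpha> \<beta>. Ppow i)"
proof (cases i)
  case True
  have "Pplus = mat 4 4 (\<lambda>(r, c). if r = c then complex_of_real (if r < 2 then 1 else 0) else 0)"
    unfolding Pplus_def by (rule eq_matI) auto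
  then show ?thesis using True by (intro good_diag) (auto simp: Ppow_def)
next
  case False
  have "1\<^sub>m 4 = mat 4 4 (\<lambda>(r, c). if r = c then complex_of_real 1 else (0::complex))"
    by (rule eq_matI) auto
  then show ?thesis using False by (intro good_diag) (auto simp: Ppow_def)
qed

definition muf :: "real \<Rightarrow> complex \<Rightarrow> complex \<Rightarrow> complex \<Rightarrow> complex \<Rightarrow> nat \<times> nat \<Rightarrow> complex" where
  "muf b d1 d2 \<alpha> \<beta> = (\<lambda>(r, c).
   if r = 0 \<and> c = 2 then - b * cnj \<alpha> else if r = 0 \<and> c = 3 then - b * cnj \<beta>
   else if r = 2 \<and> c = 0 then b * \<alpha> else if r = 3 \<and> c = 0 then b * \<beta>
   else if r = 2 \<and> c = 2 then d1 else if r = 3 \<and> c = 3 then d2 else 0)"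

lemma less4: "i < (4::nat) \<Longrightarrow> i = 0 \<or> i = 1 \<or> i = 2 \<or> i = 3" by auto
lemma sum2: "(\<Sum>i = 0..<(2::nat). f i) = f 0 + (f 1 :: 'a::comm_monoid_add)" by (simp add: numeral_2_eq_2)
lemma less2: "i < (2::nat) \<Longrightarrow> i = 0 \<or> i = 1" by auto

lemma mu_explicit: "mu b d1 d2 \<alpha> \<beta> = mat 4 4 (muf b d1 d2 \<alpha> \<beta>)"
proof (rule eq_matI, goal_cases)
  case (1 i j)
  then have "i = 0 \<or> i = 1 \<or> i = 2 \<or> i = 3" "j = 0 \<or> j = 1 \<or> j = 2 \<or> j = 3" by auto
  then show ?case
    by (auto simp: mu_def Bm_def Dm_def um_def adj_def mat_of_rows_list_def scalar_prod_def muf_def sum2)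
qed (simp_all add: mu_def Bm_def Dm_def um_def adj_def mat_of_rows_list_def)


lemma good_mu:
  assumes "Re d1 = 0" "Re d2 = 0"
  shows "good 1 (\<lambda>\<alpha> \<beta>. mu b d1 d2 \<alpha> \<beta>)"
proof -
  have d1: "d1 = \<i> * complex_of_real (Im d1)" using assms(1) by (simp add: complex_eq_iff)
  have d2: "d2 = \<i> * complex_of_real (Im d2)" using assms(2) by (simp add: complex_eq_iff)
  define q :: "nat \<Rightarrow> nat \<Rightarrow> real poly poly" where "q r c = (if r = 0 \<and> (c = 2 \<or> c = 3) then [:[:b:]:]
     else if (r = 2 \<or> r = 3) \<and> c = 0 then [:[:-b:]:]
     else if r = 2 \<and> c = 2 then [:[:- Im d1:]:]
     else if r = 3 \<and> c = 3 then [:[:- Im d2:]:] else 0)" for r c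
  have "mu b d1 d2 \<alpha> \<beta> $$ (r, c) = av \<alpha> \<beta> r c * \<i> ^ (1 + eps r + eps c) * ev2 (q r c) \<alpha> \<beta>"
    if "r < 4" "c < 4" for \<alpha> \<beta> r c
    using less4[OF that(1)] less4[OF that(2)]
    apply (simp only: mu_explicit index_mat that split: prod.split)
    apply (elim disjE)
    by (simp_all add: muf_def av_def vv_def eps_def q_def)
       (subst d1; simp | subst d2; simp)+
  then show ?thesis unfolding good_def
    by (intro exI[of _ q] allI conjI) (auto simp: mu_explicit)
qed


lemma good_cong: "good n F \<Longrightarrow> n = m \<Longrightarrow> good m F" by simp

lemma good_Hword:
  assumes "Re d1 = 0" "Re d2 = 0"
  shows "is \<noteq> [] \<Longrightarrow> good (length is - 1) (\<lambda>\<alpha> \<beta>. Hword (mu b d1 d2 \<alpha> \<beta>) is)"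
proof (induction "is" rule: induct_list012)
  case 1 then show ?case by simp
next
  case (2 x) then show ?case using good_Ppow[of x] by simp
next
  case (3 x y zs)
  have "good (0 + 1 + (length (y # zs) - 1))
     (\<lambda>\<alpha> \<beta>. Ppow x * mu b d1 d2 \<alpha> \<beta> * Hword (mu b d1 d2 \<alpha> \<beta>) (y # zs))"
    by (rule good_mult[OF good_mult[OF good_Ppow good_mu[OF assms]]]) (use 3 in simp)
  then show ?case by simp
qed

lemma good_sum:
  assumes "finite S" "\<And>s. s \<in> S \<Longrightarrow> good n (F s)"
  shows "good n (\<lambda>\<alpha> \<beta>. mat 4 4 (\<lambda>(r, c). \<Sum>s\<in>S. F s \<alpha> \<beta> $$ (r, c)))"
proof -
  have "\<forall>s\<in>S. \<exists>q. \<forall>\<alpha> \<beta>. dim_row (F s \<alpha> \<beta>) = 4 \<and> dim_col (F s \<alpha> \<beta>) = 4 \<and>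
     (\<forall>r<4. \<forall>c<4. F s \<alpha> \<beta> $$ (r, c) = av \<alpha> \<beta> r c * \<i> ^ (n + eps r + eps c) * ev2 (q r c) \<alpha> \<beta>)"
    using assms(2) unfolding good_def by blast
  then obtain Q where Q: "\<And>s \<alpha> \<beta> r c. s \<in> S \<Longrightarrow> r < 4 \<Longrightarrow> c < 4 \<Longrightarrow>
     F s \<alpha> \<beta> $$ (r, c) = av \<alpha> \<beta> r c * \<i> ^ (n + eps r + eps c) * ev2 (Q s r c) \<alpha> \<beta>"
    by metis
  define q where "q r c = (\<Sum>s\<in>S. Q s r c)" for r c
  show ?thesis unfolding good_def
    by (intro exI[of _ q] allI conjI) (auto simp: Q q_def assms(1) sum_distrib_left)
qed

lemma good_H:
  assumes "Re d1 = 0" "Re d2 = 0"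
  shows "good m (\<lambda>\<alpha> \<beta>. H m l (mu b d1 d2 \<alpha> \<beta>))"
proof -
  have fin: "finite {is :: bool list. length is = m + 1 \<and> length (filter id is) = l}"
    by (rule finite_subset[OF _ finite_lists_length_eq[of "UNIV :: bool set" "m + 1"]]) auto
  show ?thesis unfolding H_def
    by (rule good_sum[OF fin], rule good_cong[OF good_Hword[OF assms]]) auto
qed


theorem proposition3p1:
  fixes b :: real and d1 d2 :: complex and n k :: nat
  assumes "b > 0" and "Re d1 = 0" and "Re d2 = 0"
    and "1 \<le> n" and "1 \<le> k" and "k \<le> n + 1"
  shows "\<exists>N c1 c2. \<forall>\<alpha> \<beta> :: complex. (cmod \<alpha>)\<^sup>2 + (cmod \<beta>)\<^sup>2 = 1 \<longrightarrow>
      (\<i> ^ (n + 1)) \<cdot>\<^sub>m blk_mm (mu b d1 d2 \<alpha> \<beta> * H (n - 1) (k - 1) (mu b d1 d2 \<alpha> \<beta>))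
        * um \<alpha> \<beta>
      = mat_of_rows_list 2
          [[\<i> * complex_of_real (poly2 N c1 ((cmod \<alpha>)\<^sup>2) ((cmod \<beta>)\<^sup>2)) * \<alpha>, 0],
           [\<i> * complex_of_real (poly2 N c2 ((cmod \<alpha>)\<^sup>2) ((cmod \<beta>)\<^sup>2)) * \<beta>, 0]]"
proof -
  have "good (1 + (n - 1)) (\<lambda>\<alpha> \<beta>. mu b d1 d2 \<alpha> \<beta> * H (n - 1) (k - 1) (mu b d1 d2 \<alpha> \<beta>))"
    by (rule good_mult[OF good_mu good_H]) (use assms in auto)
  then have "good n (\<lambda>\<alpha> \<beta>. mu b d1 d2 \<alpha> \<beta> * H (n - 1) (k - 1) (mu b d1 d2 \<alpha> \<beta>))"
    using assms(4) by simp
  then obtain q where q: "\<And>\<alpha> \<beta>. dim_row (mu b d1 d2 \<alpha> \<beta> * H (n - 1) (k - 1) (mu b d1 d2 \<alpha> \<beta>)) = 4 \<and>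
      dim_col (mu b d1 d2 \<alpha> \<beta> * H (n - 1) (k - 1) (mu b d1 d2 \<alpha> \<beta>)) = 4 \<and>
     (\<forall>r<4. \<forall>c<4. (mu b d1 d2 \<alpha> \<beta> * H (n - 1) (k - 1) (mu b d1 d2 \<alpha> \<beta>)) $$ (r, c)
        = av \<alpha> \<beta> r c * \<i> ^ (n + eps r + eps c) * ev2 (q r c) \<alpha> \<beta>)"
    unfolding good_def by blast
  define p1 where "p1 = [:[:(-1) ^ (n + 1):]:] * (q 2 2 + PY * q 2 3)"
  define p2 where "p2 = [:[:(-1) ^ (n + 1):]:] * (PX * q 3 2 + q 3 3)"
  obtain N1 where N1: "\<And>N. N \<ge> N1 \<Longrightarrow> \<exists>c. \<forall>x y. eval2 p1 x y = poly2 N c x y"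
    using eval2_poly2[of p1] by blast
  obtain N2 where N2: "\<And>N. N \<ge> N2 \<Longrightarrow> \<exists>c. \<forall>x y. eval2 p2 x y = poly2 N c x y"
    using eval2_poly2[of p2] by blast
  obtain c1 where c1: "\<And>x y. eval2 p1 x y = poly2 (max N1 N2) c1 x y" using N1[of "max N1 N2"] by auto
  obtain c2 where c2: "\<And>x y. eval2 p2 x y = poly2 (max N1 N2) c2 x y" using N2[of "max N1 N2"] by auto
  have ip: "\<i> ^ (n + 1) * \<i> ^ (n + 2) = \<i> * (-1) ^ (n + 1)"
  proof -
    have A: "(\<i>::complex) ^ (n + 2) = \<i> ^ (n + 1) * \<i>" by (simp add: mult_ac)
    have B: "(\<i>::complex) ^ (n + 1) * \<i> ^ (n + 1) = (\<i> * \<i>) ^ (n + 1)" by (rule power_mult_distrib[symmetric])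
    have "(\<i>::complex) ^ (n + 1) * \<i> ^ (n + 2) = (\<i> ^ (n + 1) * \<i> ^ (n + 1)) * \<i>"
      by (simp only: A mult.assoc)
    also have "\<dots> = (\<i> * \<i>) ^ (n + 1) * \<i>" by (simp only: B)
    also have "\<dots> = \<i> * (-1) ^ (n + 1)" by simp
    finally show ?thesis .
  qed
  have fa: "P * (Q * A) * \<alpha> + P * (\<alpha> * cnj \<beta> * Q * B) * \<beta>
     = (P * Q) * (A + (complex_of_real (cmod \<beta>))\<^sup>2 * B) * \<alpha>" for P Q A B \<alpha> \<beta> :: complex
    by (simp add: zcnj[symmetric] algebra_simps)
  have fb: "P * (\<beta> * cnj \<alpha> * Q * A) * \<alpha> + P * (Q * B) * \<beta>
     = (P * Q) * ((complex_of_real (cmod \<alpha>))\<^sup>2 * A + B) * \<beta>" for P Q A B \<alpha> \<beta> :: complex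
    by (simp add: zcnj[symmetric] algebra_simps)
  have "(\<i> ^ (n + 1)) \<cdot>\<^sub>m blk_mm (mu b d1 d2 \<alpha> \<beta> * H (n - 1) (k - 1) (mu b d1 d2 \<alpha> \<beta>))
        * um \<alpha> \<beta>
      = mat_of_rows_list 2
          [[\<i> * complex_of_real (eval2 p1 ((cmod \<alpha>)\<^sup>2) ((cmod \<beta>)\<^sup>2)) * \<alpha>, 0],
           [\<i> * complex_of_real (eval2 p2 ((cmod \<alpha>)\<^sup>2) ((cmod \<beta>)\<^sup>2)) * \<beta>, 0]]" for \<alpha> \<beta>
  proof -
    define X where "X = mu b d1 d2 \<alpha> \<beta> * H (n - 1) (k - 1) (mu b d1 d2 \<alpha> \<beta>)"
    have dX: "dim_row X = 4" "dim_col X = 4" using q[of \<alpha> \<beta>] unfolding X_def by auto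
    have qX: "X $$ (r, c) = av \<alpha> \<beta> r c * \<i> ^ (n + eps r + eps c) * ev2 (q r c) \<alpha> \<beta>"
      if "r < 4" "c < 4" for r c using q[of \<alpha> \<beta>] that unfolding X_def by auto
    have e22: "X $$ (2, 2) = \<i> ^ (n + 2) * ev2 (q 2 2) \<alpha> \<beta>"
      using qX[of 2 2] by (simp add: av_def eps_def)
    have e23: "X $$ (2, 3) = \<alpha> * cnj \<beta> * \<i> ^ (n + 2) * ev2 (q 2 3) \<alpha> \<beta>"
      using qX[of 2 3] by (simp add: av_def vv_def eps_def)
    have e32: "X $$ (3, 2) = \<beta> * cnj \<alpha> * \<i> ^ (n + 2) * ev2 (q 3 2) \<alpha> \<beta>"
      using qX[of 3 2] by (simp add: av_def vv_def eps_def)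
    have e33: "X $$ (3, 3) = \<i> ^ (n + 2) * ev2 (q 3 3) \<alpha> \<beta>"
      using qX[of 3 3] by (simp add: av_def eps_def)
    have "(\<i> ^ (n + 1)) \<cdot>\<^sub>m blk_mm X * um \<alpha> \<beta> = mat 2 2 (\<lambda>(i, j). if j = 0 then
        \<i> ^ (n + 1) * X $$ (i + 2, 2) * \<alpha> + \<i> ^ (n + 1) * X $$ (i + 2, 3) * \<beta> else 0)"
    proof (rule eq_matI, goal_cases)
      case (1 i j)
      then have "j = 0 \<or> j = 1" by auto
      then show ?case using 1
        by (auto simp: blk_mm_def um_def mat_of_rows_list_def scalar_prod_def sum2 numeral_2_eq_2 numeral_3_eq_3)
    qed (simp_all add: blk_mm_def um_def mat_of_rows_list_def)
    also have "\<dots> = mat_of_rows_list 2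
          [[\<i> * complex_of_real (eval2 p1 ((cmod \<alpha>)\<^sup>2) ((cmod \<beta>)\<^sup>2)) * \<alpha>, 0],
           [\<i> * complex_of_real (eval2 p2 ((cmod \<alpha>)\<^sup>2) ((cmod \<beta>)\<^sup>2)) * \<beta>, 0]]"
    proof (rule eq_matI, goal_cases)
      case (1 i j)
      then have "i = 0 \<or> i = 1" "j = 0 \<or> j = 1" by (auto simp: mat_of_rows_list_def)
      moreover have "\<i> ^ (n + 1) * X $$ (2, 2) * \<alpha> + \<i> ^ (n + 1) * X $$ (2, 3) * \<beta> =
         \<i> * complex_of_real (eval2 p1 ((cmod \<alpha>)\<^sup>2) ((cmod \<beta>)\<^sup>2)) * \<alpha>"
        unfolding e22 e23 fa[of "\<i> ^ (n + 1)"] ip p1_def by (simp add: mult_ac)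
      moreover have "\<i> ^ (n + 1) * X $$ (3, 2) * \<alpha> + \<i> ^ (n + 1) * X $$ (3, 3) * \<beta> =
         \<i> * complex_of_real (eval2 p2 ((cmod \<alpha>)\<^sup>2) ((cmod \<beta>)\<^sup>2)) * \<beta>"
        unfolding e32 e33 fb[of "\<i> ^ (n + 1)"] ip p2_def by (simp add: mult_ac)
      ultimately show ?case
        by (auto simp: mat_of_rows_list_def numeral_2_eq_2 numeral_3_eq_3)
    qed (simp_all add: mat_of_rows_list_def)
    finally show ?thesis unfolding X_def .
  qed
  then show ?thesis unfolding c1 c2 by blast
qed

end
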